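(* Let $w$ be a nonnegative weight function on $\mathbb R$ and let $w_1(x)=x^2w(x)$. On $\Omega=\{(x,y):x=0\text{ or }y=0\}$ consider the inner product (on $\mathbb R[x,y]/\langle xy\rangle$) $$\langle f,g\rangle=\int_{\mathbb R}f(x,0)g(x,0)w(x)\,dx+\int_{\mathbb R}f(0,y)g(0,y)w(y)\,dy .$$ Define $$Y_{n,1}(x,y)=p_n(w;x)+p_n(w;y)-p_n(w;0)\ (n\ge0),\qquad Y_{n,2}(x,y)=x\,p_{n-1}(w_1;x)-y\,p_{n-1}(w_1;y)\ (n\ge1).$$ Then for $n\ge1$, $Y_{n,1}$ and $Y_{n,2}$ belong to $\mathcal H_n(\varpi)$ and are mutually orthogonal, and $$\langle Y_{n,1},Y_{n,1}\rangle=2h_n(w),\qquad \langle Y_{n,2},Y_{n,2}\rangle=2h_{n-1}(w_1).$$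
   Context: For a nonnegative weight $v$ (finite moments, infinite support), $p_n(v;\cdot)$ is an orthogonal polynomial of degree $n$ for $v$ (any fixed nonzero normalization) and $h_n(v)=\int p_n(v;t)^2v(t)\,dt$. $\mathcal H_n(\varpi)$ is the space of polynomials $P$ of degree $n$ in two variables with $\langle P,Q\rangle=0$ for all polynomials $Q$ of degree $<n$ and $\langle P,P\rangle>0$, considered modulo the ideal $\langle xy\rangle$. *)

theory Defs
  imports "HOL-Analysis.Analysis" "HOL-Computational_Algebra.Polynomial"
begin

definition weight :: "(real \<Rightarrow> real) \<Rightarrow> bool" where
  "weight v \<longleftrightarrow> (\<forall>t. 0 \<le> v t) \<and> v \<in> borel_measurable lborel \<and>
     (\<forall>k::nat. integrable lborel (\<lambda>t. t ^ k * v t)) \<and>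
     \<not> (\<exists>S. finite S \<and> (AE t in lborel. v t \<noteq> 0 \<longrightarrow> t \<in> S))"

definition is_OP :: "(real \<Rightarrow> real) \<Rightarrow> nat \<Rightarrow> real poly \<Rightarrow> bool" where
  "is_OP v n p \<longleftrightarrow> p \<noteq> 0 \<and> degree p = n \<and>
     (\<forall>q::real poly. degree q < n \<longrightarrow> (\<integral>t. poly p t * poly q t * v t \<partial>lborel) = 0)"

definition hnorm :: "(real \<Rightarrow> real) \<Rightarrow> real poly \<Rightarrow> real" where
  "hnorm v p = (\<integral>t. (poly p t)\<^sup>2 * v t \<partial>lborel)"

text \<open>Bivariate real polynomials, represented by coefficient functions c i j
 (coefficient of x^i y^j) with finite support.\<close>
type_synonym bpoly = "nat \<Rightarrow> nat \<Rightarrow> real"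

definition bsupp :: "bpoly \<Rightarrow> (nat \<times> nat) set" where
  "bsupp c = {(i, j). c i j \<noteq> 0}"

definition is_bpoly :: "bpoly \<Rightarrow> bool" where
  "is_bpoly c \<longleftrightarrow> finite (bsupp c)"

definition beval :: "bpoly \<Rightarrow> real \<Rightarrow> real \<Rightarrow> real" where
  "beval c x y = (\<Sum>(i, j)\<in>bsupp c. c i j * x ^ i * y ^ j)"

text \<open>Total degree (the zero polynomial gets degree 0).\<close>
definition bdeg :: "bpoly \<Rightarrow> nat" where
  "bdeg c = (if bsupp c = {} then 0 else Max ((\<lambda>(i, j). i + j) ` bsupp c))"

text \<open>Congruence modulo the ideal generated by xy: coefficients agree on all
 monomials x^i y^j with i = 0 or j = 0.\<close>
definition bcong_xy :: "bpoly \<Rightarrow> bpoly \<Rightarrow> bool" where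
  "bcong_xy c d \<longleftrightarrow> (\<forall>i j. (i = 0 \<or> j = 0) \<longrightarrow> c i j = d i j)"

definition bip :: "(real \<Rightarrow> real) \<Rightarrow> bpoly \<Rightarrow> bpoly \<Rightarrow> real" where
  "bip w f g = (\<integral>x. beval f x 0 * beval g x 0 * w x \<partial>lborel)
             + (\<integral>y. beval f 0 y * beval g 0 y * w y \<partial>lborel)"

text \<open>The class of P modulo xy lies in H_n: it has a representative of degree n
 orthogonal to all polynomials of degree < n, with positive norm.\<close>
definition in_H :: "(real \<Rightarrow> real) \<Rightarrow> nat \<Rightarrow> bpoly \<Rightarrow> bool" where
  "in_H w n P \<longleftrightarrow> (\<exists>P'. is_bpoly P' \<and> bcong_xy P' P \<and> bdeg P' = n \<and>
      (\<forall>Q. is_bpoly Q \<and> bdeg Q < n \<longrightarrow> bip w P' Q = 0) \<and> bip w P' P' > 0)"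

definition bsum_of :: "real poly \<Rightarrow> real poly \<Rightarrow> bpoly" where
  "bsum_of f g = (\<lambda>i j. (if j = 0 then coeff f i else 0) + (if i = 0 then coeff g j else 0))"

text \<open>Y_{n,1}(x,y) = p(x) + p(y) - p(0).\<close>
definition Y1 :: "real poly \<Rightarrow> bpoly" where
  "Y1 p = bsum_of p (p - [:poly p 0:])"

text \<open>Y_{n,2}(x,y) = x q(x) - y q(y).\<close>
definition Y2 :: "real poly \<Rightarrow> bpoly" where
  "Y2 q = bsum_of (pCons 0 q) (- pCons 0 q)"

end

theory Submission
  imports Defs
begin

lemma poly_sum_le:
  fixes p :: "real poly"
  assumes "degree p \<le> D"
  shows "poly p x = (\<Sum>i\<le>D. coeff p i * x ^ i)"
proof -
  have "poly p x = (\<Sum>i\<le>degree p. coeff p i * x ^ i)" by (rule poly_altdef)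
  also have "\<dots> = (\<Sum>i\<le>D. coeff p i * x ^ i)"
    by (rule sum.mono_neutral_left) (use assms in \<open>auto simp: coeff_eq_0\<close>)
  finally show ?thesis .
qed

lemma beval_box:
  assumes "bsupp c \<subseteq> {..D} \<times> {..D}"
  shows "beval c x y = (\<Sum>i\<le>D. \<Sum>j\<le>D. c i j * x ^ i * y ^ j)"
proof -
  have "beval c x y = (\<Sum>(i, j)\<in>{..D} \<times> {..D}. c i j * x ^ i * y ^ j)"
    unfolding beval_def
    by (rule sum.mono_neutral_left) (use assms in \<open>auto simp: bsupp_def\<close>)
  also have "\<dots> = (\<Sum>i\<le>D. \<Sum>j\<le>D. c i j * x ^ i * y ^ j)"
    by (simp add: sum.cartesian_product)
  finally show ?thesis .
qed

definition axpoly :: "bpoly \<Rightarrow> nat \<Rightarrow> real poly" where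
  "axpoly c D = (\<Sum>i\<le>D. monom (c i 0) i)"
definition aypoly :: "bpoly \<Rightarrow> nat \<Rightarrow> real poly" where
  "aypoly c D = (\<Sum>j\<le>D. monom (c 0 j) j)"

lemma axpoly_eval:
  assumes "bsupp c \<subseteq> {..D} \<times> {..D}"
  shows "beval c x 0 = poly (axpoly c D) x"
proof -
  have "beval c x 0 = (\<Sum>i\<le>D. \<Sum>j\<le>D. c i j * x ^ i * 0 ^ j)" by (rule beval_box[OF assms])
  also have "\<dots> = (\<Sum>i\<le>D. c i 0 * x ^ i)"
  proof (rule sum.cong[OF refl])
    fix i assume "i \<in> {..D}"
    have "(\<Sum>j\<le>D. c i j * x ^ i * 0 ^ j) = (\<Sum>j\<le>D. if j = 0 then c i 0 * x ^ i else 0)"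
      by (rule sum.cong) (auto simp: power_0_left)
    also have "\<dots> = c i 0 * x ^ i" by (simp add: sum.delta)
    finally show "(\<Sum>j\<le>D. c i j * x ^ i * 0 ^ j) = c i 0 * x ^ i" .
  qed
  also have "\<dots> = poly (axpoly c D) x"
    by (simp add: axpoly_def poly_sum poly_monom)
  finally show ?thesis .
qed

lemma aypoly_eval:
  assumes "bsupp c \<subseteq> {..D} \<times> {..D}"
  shows "beval c 0 y = poly (aypoly c D) y"
proof -
  have "beval c 0 y = (\<Sum>i\<le>D. \<Sum>j\<le>D. c i j * 0 ^ i * y ^ j)" by (rule beval_box[OF assms])
  also have "\<dots> = (\<Sum>i\<le>D. if i = 0 then (\<Sum>j\<le>D. c 0 j * y ^ j) else 0)"
    by (rule sum.cong) (auto simp: power_0_left)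
  also have "\<dots> = (\<Sum>j\<le>D. c 0 j * y ^ j)" by (simp add: sum.delta)
  also have "\<dots> = poly (aypoly c D) y"
    by (simp add: aypoly_def poly_sum poly_monom)
  finally show ?thesis .
qed

lemma axpoly_deg: "degree (axpoly c D) \<le> D"
  unfolding axpoly_def
  by (rule degree_sum_le) (auto intro: order_trans[OF degree_monom_le])

lemma aypoly_deg: "degree (aypoly c D) \<le> D"
  unfolding aypoly_def
  by (rule degree_sum_le) (auto intro: order_trans[OF degree_monom_le])

lemma axpoly_coeff0: "coeff (axpoly c D) 0 = c 0 0"
  unfolding axpoly_def by (simp add: coeff_sum coeff_monom)

lemma aypoly_coeff0: "coeff (aypoly c D) 0 = c 0 0"
  unfolding aypoly_def by (simp add: coeff_sum coeff_monom)

lemma bdeg_box: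
  assumes "is_bpoly c"
  shows "bsupp c \<subseteq> {..bdeg c} \<times> {..bdeg c}"
proof
  fix z assume z: "z \<in> bsupp c"
  obtain i j where zij: "z = (i, j)" by fastforce
  have "i + j \<le> Max ((\<lambda>(i, j). i + j) ` bsupp c)"
    by (rule Max_ge) (use assms z zij in \<open>auto simp: is_bpoly_def\<close>)
  then show "z \<in> {..bdeg c} \<times> {..bdeg c}" using z zij by (auto simp: bdeg_def)
qed

lemma bsum_supp:
  "bsupp (bsum_of f g) \<subseteq> {(i, 0) | i. i \<le> degree f} \<union> {(0, j) | j. j \<le> degree g}"
proof
  fix z assume z: "z \<in> bsupp (bsum_of f g)"
  obtain i j where zij: "z = (i, j)" by fastforce
  have nz: "bsum_of f g i j \<noteq> 0" using z zij by (auto simp: bsupp_def)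
  show "z \<in> {(i, 0) | i. i \<le> degree f} \<union> {(0, j) | j. j \<le> degree g}"
  proof (cases "i = 0 \<and> j = 0")
    case True then show ?thesis using zij by auto
  next
    case False
    then show ?thesis using nz zij
      by (auto simp: bsum_of_def intro: le_degree split: if_splits)
  qed
qed

lemma bsum_box:
  assumes "degree f \<le> D" "degree g \<le> D"
  shows "bsupp (bsum_of f g) \<subseteq> {..D} \<times> {..D}"
  using bsum_supp[of f g] assms by auto

lemma bsum_bpoly: "is_bpoly (bsum_of f g)"
  unfolding is_bpoly_def
  by (rule finite_subset[OF bsum_box[of f "max (degree f) (degree g)" g]]) auto

lemma beval_bsum: "beval (bsum_of f g) x y = poly f x + poly g y"
proof -
  let ?D = "max (degree f) (degree g)"
  have "beval (bsum_of f g) x y = (\<Sum>i\<le>?D. \<Sum>j\<le>?D. bsum_of f g i j * x ^ i * y ^ j)"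
    by (rule beval_box[OF bsum_box]) auto
  also have "\<dots> = (\<Sum>i\<le>?D. \<Sum>j\<le>?D. (if j = 0 then coeff f i * x ^ i else 0)
                     + (if i = 0 then coeff g j * y ^ j else 0))"
    by (intro sum.cong refl) (auto simp: bsum_of_def algebra_simps)
  also have "\<dots> = (\<Sum>i\<le>?D. coeff f i * x ^ i) + (\<Sum>j\<le>?D. coeff g j * y ^ j)"
  proof -
    have a: "\<And>i. (\<Sum>j\<le>?D. (if j = 0 then coeff f i * x ^ i else 0)
                     + (if i = 0 then coeff g j * y ^ j else 0))
          = coeff f i * x ^ i + (if i = 0 then (\<Sum>j\<le>?D. coeff g j * y ^ j) else 0)"
      by (simp add: sum.distrib sum.delta)
    have "(\<Sum>i\<le>?D. \<Sum>j\<le>?D. (if j = 0 then coeff f i * x ^ i else 0)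
                     + (if i = 0 then coeff g j * y ^ j else 0))
        = (\<Sum>i\<le>?D. coeff f i * x ^ i + (if i = 0 then (\<Sum>j\<le>?D. coeff g j * y ^ j) else 0))"
      by (simp only: a)
    also have "\<dots> = (\<Sum>i\<le>?D. coeff f i * x ^ i) + (\<Sum>j\<le>?D. coeff g j * y ^ j)"
      by (simp only: sum.distrib) (simp add: sum.delta)
    finally show ?thesis .
  qed
  also have "\<dots> = poly f x + poly g y"
    using poly_sum_le[of f ?D x] poly_sum_le[of g ?D y] by simp
  finally show ?thesis .
qed

lemma bdeg_bsum:
  assumes "degree f = n" "degree g \<le> n" "n \<ge> 1" "f \<noteq> 0"
  shows "bdeg (bsum_of f g) = n"
proof -
  let ?S = "bsupp (bsum_of f g)"
  have sub: "?S \<subseteq> {(i, 0) | i. i \<le> n} \<union> {(0, j) | j. j \<le> n}"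
    using bsum_supp[of f g] assms by auto
  have fin: "finite ?S" using bsum_bpoly[of f g] by (simp add: is_bpoly_def)
  have mem: "(n, 0) \<in> ?S" using assms
    by (auto simp: bsupp_def bsum_of_def)
  have "Max ((\<lambda>(i, j). i + j) ` ?S) = n"
  proof (rule Max_eqI)
    show "finite ((\<lambda>(i, j). i + j) ` ?S)" using fin by simp
    show "\<And>y. y \<in> (\<lambda>(i, j). i + j) ` ?S \<Longrightarrow> y \<le> n" using sub by auto
    show "n \<in> (\<lambda>(i, j). i + j) ` ?S" using mem by force
  qed
  then show ?thesis using mem by (auto simp: bdeg_def)
qed

lemma weight_int:
  assumes "weight w"
  shows "integrable lborel (\<lambda>t. poly r t * w t)"
proof -
  have "(\<lambda>t. poly r t * w t) = (\<lambda>t. \<Sum>i\<le>degree r. coeff r i * (t ^ i * w t))"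
    by (auto simp: poly_altdef sum_distrib_right mult.assoc)
  moreover have "integrable lborel (\<lambda>t. \<Sum>i\<le>degree r. coeff r i * (t ^ i * w t))"
    using assms by (auto simp: weight_def)
  ultimately show ?thesis by simp
qed

lemma weight_x2:
  assumes "weight w"
  shows "weight (\<lambda>t. t\<^sup>2 * w t)"
proof -
  have m: "\<And>k::nat. integrable lborel (\<lambda>t. t ^ k * (t\<^sup>2 * w t))"
  proof -
    fix k :: nat
    have "(\<lambda>t::real. t ^ k * (t\<^sup>2 * w t)) = (\<lambda>t. t ^ (k+2) * w t)"
      by (rule ext) (simp add: power_add power2_eq_square algebra_simps)
    moreover have "integrable lborel (\<lambda>t. t ^ (k+2) * w t)"
      using assms unfolding weight_def by blast
    ultimately show "integrable lborel (\<lambda>t. t ^ k * (t\<^sup>2 * w t))"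
      by simp
  qed
  have s: "\<not> (\<exists>S. finite S \<and> (AE t in lborel. t\<^sup>2 * w t \<noteq> 0 \<longrightarrow> t \<in> S))"
  proof
    assume "\<exists>S. finite S \<and> (AE t in lborel. t\<^sup>2 * w t \<noteq> 0 \<longrightarrow> t \<in> S)"
    then obtain S where S: "finite S" "AE t in lborel. t\<^sup>2 * w t \<noteq> 0 \<longrightarrow> t \<in> S" by blast
    have "AE t in lborel. w t \<noteq> 0 \<longrightarrow> t \<in> insert 0 S"
      using S(2) by eventually_elim auto
    then show False using assms S(1) unfolding weight_def by blast
  qed
  show ?thesis using assms m s unfolding weight_def by auto
qed

lemma weight_pos:
  assumes "weight w" "r \<noteq> 0"
  shows "hnorm w r > 0"
proof -
  have eq: "(\<lambda>t. (poly r t)\<^sup>2 * w t) = (\<lambda>t. poly (r * r) t * w t)"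
    by (auto simp: power2_eq_square)
  have int: "integrable lborel (\<lambda>t. (poly r t)\<^sup>2 * w t)"
    unfolding eq by (rule weight_int[OF assms(1)])
  have nn: "\<And>t. 0 \<le> (poly r t)\<^sup>2 * w t" using assms(1) by (auto simp: weight_def)
  have ge: "hnorm w r \<ge> 0" unfolding hnorm_def by (rule integral_nonneg_AE) (use nn in auto)
  show ?thesis
  proof (rule ccontr)
    assume "\<not> hnorm w r > 0"
    then have "hnorm w r = 0" using ge by auto
    then have "AE t in lborel. (poly r t)\<^sup>2 * w t = 0"
      using integral_nonneg_eq_0_iff_AE[OF int] nn unfolding hnorm_def by auto
    then have "AE t in lborel. w t \<noteq> 0 \<longrightarrow> t \<in> {t. poly r t = 0}"
      by eventually_elim auto
    moreover have "finite {t. poly r t = 0}" using poly_roots_finite[OF assms(2)] .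
    ultimately show False using assms(1) unfolding weight_def by blast
  qed
qed

lemma Y1_eval: "beval (Y1 p) x 0 = poly p x" "beval (Y1 p) 0 y = poly p y"
  by (auto simp: Y1_def beval_bsum)

lemma Y2_eval: "beval (Y2 q) x 0 = x * poly q x" "beval (Y2 q) 0 y = - (y * poly q y)"
  by (auto simp: Y2_def beval_bsum)

theorem theorem6p1:
  fixes w :: "real \<Rightarrow> real" and n :: nat and p q :: "real poly"
  assumes "weight w"
    and "n \<ge> 1"
    and "is_OP w n p"
    and "is_OP (\<lambda>t. t\<^sup>2 * w t) (n - 1) q"
  shows "in_H w n (Y1 p) \<and> in_H w n (Y2 q) \<and> bip w (Y1 p) (Y2 q) = 0 \<and>
         bip w (Y1 p) (Y1 p) = 2 * hnorm w p \<and>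
         bip w (Y2 q) (Y2 q) = 2 * hnorm (\<lambda>t. t\<^sup>2 * w t) q"
proof -
  have w2: "weight (\<lambda>t. t\<^sup>2 * w t)" using weight_x2[OF assms(1)] .
  have p0: "p \<noteq> 0" and pd: "degree p = n" and pO: "\<And>r. degree r < n \<Longrightarrow> (\<integral>t. poly p t * poly r t * w t \<partial>lborel) = 0"
    using assms(3) by (auto simp: is_OP_def)
  have q0: "q \<noteq> 0" and qd: "degree q = n - 1" and qO: "\<And>r. degree r < n - 1 \<Longrightarrow> (\<integral>t. poly q t * poly r t * (t\<^sup>2 * w t) \<partial>lborel) = 0"
    using assms(4) by (auto simp: is_OP_def)
  have B11: "bip w (Y1 p) (Y1 p) = 2 * hnorm w p"
    by (simp add: bip_def Y1_eval hnorm_def power2_eq_square)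
  have B22: "bip w (Y2 q) (Y2 q) = 2 * hnorm (\<lambda>t. t\<^sup>2 * w t) q"
    by (simp add: bip_def Y2_eval hnorm_def power2_eq_square algebra_simps)
  have B12: "bip w (Y1 p) (Y2 q) = 0"
    by (simp add: bip_def Y1_eval Y2_eval)
  have H1: "in_H w n (Y1 p)"
    unfolding in_H_def
  proof (intro exI conjI allI impI)
    show "is_bpoly (Y1 p)" by (simp add: Y1_def bsum_bpoly)
    show "bcong_xy (Y1 p) (Y1 p)" by (simp add: bcong_xy_def)
    have "degree (p - [:poly p 0:]) \<le> n"
      using pd by (intro degree_diff_le) auto
    then show "bdeg (Y1 p) = n" unfolding Y1_def
      by (rule bdeg_bsum[OF pd _ assms(2) p0])
    show "bip w (Y1 p) (Y1 p) > 0" using B11 weight_pos[OF assms(1) p0] by simp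
  next
    fix Q assume Q: "is_bpoly Q \<and> bdeg Q < n"
    let ?D = "bdeg Q"
    have box: "bsupp Q \<subseteq> {..?D} \<times> {..?D}" using bdeg_box Q by blast
    have d1: "degree (axpoly Q ?D) < n" using axpoly_deg[of Q ?D] Q by simp
    have d2: "degree (aypoly Q ?D) < n" using aypoly_deg[of Q ?D] Q by simp
    show "bip w (Y1 p) Q = 0"
      unfolding bip_def Y1_eval axpoly_eval[OF box] aypoly_eval[OF box]
      using pO[OF d1] pO[OF d2] by simp
  qed
  have H2: "in_H w n (Y2 q)"
    unfolding in_H_def
  proof (intro exI conjI allI impI)
    show "is_bpoly (Y2 q)" by (simp add: Y2_def bsum_bpoly)
    show "bcong_xy (Y2 q) (Y2 q)" by (simp add: bcong_xy_def)
    have dq: "degree (pCons 0 q) = n" using qd q0 assms(2) by simp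
    show "bdeg (Y2 q) = n" unfolding Y2_def
      by (rule bdeg_bsum[OF dq _ assms(2)]) (use dq q0 in auto)
    show "bip w (Y2 q) (Y2 q) > 0" using B22 weight_pos[OF w2 q0] by simp
  next
    fix Q assume Q: "is_bpoly Q \<and> bdeg Q < n"
    let ?D = "bdeg Q"
    have box: "bsupp Q \<subseteq> {..?D} \<times> {..?D}" using bdeg_box Q by blast
    define r1 where "r1 = axpoly Q ?D"
    define r2 where "r2 = aypoly Q ?D"
    define d where "d = r1 - r2"
    have dd: "degree d < n" unfolding d_def r1_def r2_def
      using axpoly_deg[of Q ?D] aypoly_deg[of Q ?D] Q
      by (meson degree_diff_le le_less_trans)
    have dc: "coeff d 0 = 0" by (simp add: d_def r1_def r2_def axpoly_coeff0 aypoly_coeff0)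
    obtain a s where das: "d = pCons a s" by (cases d)
    with dc have ds: "d = pCons 0 s" by simp
    have zero: "(\<integral>t. t * poly q t * poly d t * w t \<partial>lborel) = 0"
    proof (cases "s = 0")
      case True then show ?thesis using ds by simp
    next
      case False
      then have "degree s < n - 1" using dd ds by simp
      from qO[OF this] show ?thesis using ds
        by (simp add: power2_eq_square algebra_simps)
    qed
    have i1: "integrable lborel (\<lambda>t. t * poly q t * poly r1 t * w t)"
      using weight_int[OF assms(1), of "pCons 0 q * r1"] by (simp add: algebra_simps)
    have i2: "integrable lborel (\<lambda>t. t * poly q t * poly r2 t * w t)"
      using weight_int[OF assms(1), of "pCons 0 q * r2"] by (simp add: algebra_simps)
    have "bip w (Y2 q) Q = (\<integral>t. t * poly q t * poly r1 t * w t \<partial>lborel)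
                         - (\<integral>t. t * poly q t * poly r2 t * w t \<partial>lborel)"
      unfolding bip_def Y2_eval axpoly_eval[OF box] aypoly_eval[OF box] r1_def r2_def
      by simp
    also have "\<dots> = (\<integral>t. t * poly q t * poly r1 t * w t - t * poly q t * poly r2 t * w t \<partial>lborel)"
      using Bochner_Integration.integral_diff[OF i1 i2] by simp
    also have "\<dots> = (\<integral>t. t * poly q t * poly d t * w t \<partial>lborel)"
      by (simp add: d_def algebra_simps)
    finally show "bip w (Y2 q) Q = 0" using zero by simp
  qed
  show ?thesis using H1 H2 B12 B11 B22 by simp
qed

end
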